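(* Let $f,g:\mathbb{R}^{N}\rightarrow (-\infty ,\infty ]$ be Borel measurable, and suppose there are constants $c>0$ and $\alpha>0$ such that $f(x)\geq c|x|^{\alpha }$ and $g(x)\geq c|x|^{\alpha }$ for $|x|$ large enough. Let $m_f:=\inf f$, $m_g:=\inf g$, $f_+:=\max\{f,0\}$, $m_{f_+}:=\inf f_+$. Then: (i) If $m_{f},m_{g}\in \mathbb{R}$ and $m_{f}+m_{g}>0$, then $(f\Box g)^{-1}\in L^{p}(\mathbb{R}^N)$ for every $p\geq 1$ with $p>N/\alpha$. (ii) If $g\geq 0$ and $m_{f_{+}}+m_{g}>0$, then $(f\veebar g)^{-1}\in L^{p}(\mathbb{R}^N)$ for every $p\geq 1$ with $p>N/\alpha$.
   Context: $(f\Box g)(x):=\inf_{y}(f(x-y)+g(y))$ and $(f\veebar g)(x):=\inf_{y}\max\{f(x-y),g(y)\}$. For $h\ge0$, $h^{-1}:=1/h$ (with $1/0=\infty$, $1/\infty=0$). *)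

theory Defs
  imports "HOL-Analysis.Analysis"
begin

definition infconv :: "('a::real_vector \<Rightarrow> ereal) \<Rightarrow> ('a \<Rightarrow> ereal) \<Rightarrow> 'a \<Rightarrow> ereal" where
  "infconv f g x = (INF y. f (x - y) + g y)"

definition levconv :: "('a::real_vector \<Rightarrow> ereal) \<Rightarrow> ('a \<Rightarrow> ereal) \<Rightarrow> 'a \<Rightarrow> ereal" where
  "levconv f g x = (INF y. max (f (x - y)) (g y))"

text \<open>Reciprocal of a nonnegative extended real, 1/0 = infinity, 1/infinity = 0
  (value on negative arguments is irrelevant; set to 0).\<close>
definition recip :: "ereal \<Rightarrow> ennreal" where
  "recip h = (if h = 0 then top else if h = \<infinity> then 0
              else if h < 0 then 0 else ennreal (1 / real_of_ereal h))"

definition in_Lp :: "('a::euclidean_space \<Rightarrow> ennreal) \<Rightarrow> real \<Rightarrow> bool" where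
  "in_Lp h p \<longleftrightarrow> h \<in> borel_measurable lebesgue \<and> (AE x in lebesgue. h x < top) \<and>
     (\<integral>\<^sup>+ x. ennreal (enn2real (h x) powr p) \<partial>lebesgue) < top"

end

theory Submission
  imports Defs
begin

definition pre :: "(nat \<Rightarrow> nat) \<Rightarrow> nat \<Rightarrow> nat list" where
  "pre \<sigma> n = map \<sigma> [0..<n]"

definition souslin :: "(nat list \<Rightarrow> 'a set) \<Rightarrow> 'a set" where
  "souslin F = (\<Union>\<sigma>. \<Inter>n. F (pre \<sigma> n))"

definition Sous :: "'a::topological_space set \<Rightarrow> bool" where
  "Sous A \<longleftrightarrow> (\<exists>F. (\<forall>s. closed (F s)) \<and> A = souslin F)"

lemma pre_0 [simp]: "pre \<sigma> 0 = []" by (simp add: pre_def)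
lemma length_pre [simp]: "length (pre \<sigma> n) = n" by (simp add: pre_def)
lemma pre_Suc: "pre \<sigma> (Suc n) = pre \<sigma> n @ [\<sigma> n]" by (simp add: pre_def)
lemma pre_Suc': "pre \<sigma> (Suc n) = \<sigma> 0 # pre (\<lambda>k. \<sigma> (Suc k)) n"
  by (induction n) (simp_all add: pre_Suc)
lemma take_pre: "k \<le> n \<Longrightarrow> take k (pre \<sigma> n) = pre \<sigma> k"
  by (simp add: pre_def take_map)
lemma nth_pre: "k < n \<Longrightarrow> pre \<sigma> n ! k = \<sigma> k" by (simp add: pre_def)
lemma pre_case_nat: "pre (case_nat i \<tau>) (Suc m) = i # pre \<tau> m"
  by (simp add: pre_Suc')

lemma Sous_closed: "closed C \<Longrightarrow> Sous C"
  unfolding Sous_def souslin_def by (rule exI[of _ "\<lambda>s. C"]) auto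

lemma Sous_UN:
  assumes "\<And>i::nat. Sous (A i)" shows "Sous (\<Union>i. A i)"
proof -
  obtain F where F: "\<And>i s. closed (F i s)" "\<And>i. A i = souslin (F i)"
    using assms unfolding Sous_def by metis
  define G where "G s = (case s of [] \<Rightarrow> UNIV | i # t \<Rightarrow> F i t)" for s
  have cl: "closed (G s)" for s by (cases s) (auto simp: G_def F)
  have eq: "souslin G = (\<Union>i. A i)"
  proof (intro equalityI subsetI)
    fix x assume "x \<in> souslin G"
    then obtain \<sigma> where "\<And>n. x \<in> G (pre \<sigma> n)" unfolding souslin_def by auto
    then have "x \<in> G (pre \<sigma> (Suc n))" for n by blast
    then have "x \<in> F (\<sigma> 0) (pre (\<lambda>k. \<sigma> (Suc k)) n)" for n by (simp add: pre_Suc' G_def)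
    then show "x \<in> (\<Union>i. A i)" unfolding F souslin_def by blast
  next
    fix x assume "x \<in> (\<Union>i. A i)"
    then obtain i \<tau> where "\<And>n. x \<in> F i (pre \<tau> n)" unfolding F souslin_def by blast
    then have "x \<in> G (pre (case_nat i \<tau>) n)" for n
      by (cases n) (auto simp: G_def pre_case_nat)
    then show "x \<in> souslin G" unfolding souslin_def by blast
  qed
  show ?thesis unfolding Sous_def using cl eq by blast
qed

lemma Sous_INT:
  assumes "\<And>i::nat. Sous (A i)" shows "Sous (\<Inter>i. A i)"
proof -
  obtain F where F: "\<And>i s. closed (F i s)" "\<And>i. A i = souslin (F i)"
    using assms unfolding Sous_def by metis
  define G where "G s = \<Inter>{F i (pre (\<lambda>k. s ! prod_encode (i,k)) m) | i m.
       \<forall>k<m. prod_encode (i,k) < length s}" for s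
  have cl: "closed (G s)" for s unfolding G_def by (rule closed_Inter) (auto simp: F)
  have Gsub: "G s \<subseteq> F i (pre (\<lambda>k. s ! prod_encode (i,k)) m)"
    if "\<forall>k<m. prod_encode (i,k) < length s" for s i m
    unfolding G_def by (rule Inter_lower) (use that in blast)
  have Gin: "x \<in> G s" if "\<And>i m. \<forall>k<m. prod_encode (i,k) < length s \<Longrightarrow>
      x \<in> F i (pre (\<lambda>k. s ! prod_encode (i,k)) m)" for s x
    unfolding G_def using that by blast
  have eq: "souslin G = (\<Inter>i. A i)"
  proof (intro equalityI subsetI)
    fix x assume "x \<in> souslin G"
    then obtain \<tau> where x: "\<And>n. x \<in> G (pre \<tau> n)" unfolding souslin_def by auto
    have "x \<in> A i" for i
    proof -
      have "x \<in> F i (pre (\<lambda>k. \<tau> (prod_encode (i,k))) m)" for m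
      proof -
        obtain n where n: "\<forall>k<m. prod_encode (i,k) < n"
          using finite_nat_set_iff_bounded[of "(\<lambda>k. prod_encode (i,k)) ` {..<m}"] by auto
        have eq: "pre (\<lambda>k. pre \<tau> n ! prod_encode (i,k)) m = pre (\<lambda>k. \<tau> (prod_encode (i,k))) m"
          using n by (auto simp: pre_def nth_pre)
        from x[of n] Gsub[of m i "pre \<tau> n"] n show ?thesis unfolding eq[symmetric] by auto
      qed
      then show ?thesis unfolding F souslin_def by blast
    qed
    then show "x \<in> (\<Inter>i. A i)" by blast
  next
    fix x assume x: "x \<in> (\<Inter>i. A i)"
    have "x \<in> souslin (F i)" for i using x F(2) by blast
    then have "\<exists>\<sigma>. \<forall>m. x \<in> F i (pre \<sigma> m)" for i unfolding souslin_def by blast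
    then have "\<exists>\<sigma>. \<forall>i. \<forall>m. x \<in> F i (pre (\<sigma> i) m)"
      using choice[of "\<lambda>i \<sigma>. \<forall>m. x \<in> F i (pre \<sigma> m)"] by blast
    then obtain \<sigma> where \<sigma>: "\<And>i m. x \<in> F i (pre (\<sigma> i) m)" by blast
    define \<tau> where "\<tau> n = \<sigma> (fst (prod_decode n)) (snd (prod_decode n))" for n
    have tau: "\<tau> (prod_encode (i,k)) = \<sigma> i k" for i k by (simp add: \<tau>_def)
    have "x \<in> G (pre \<tau> n)" for n
    proof (rule Gin)
      fix i m assume c: "\<forall>k<m. prod_encode (i,k) < length (pre \<tau> n)"
      have "pre (\<lambda>k. pre \<tau> n ! prod_encode (i,k)) m = pre (\<sigma> i) m"
        unfolding pre_def by (rule map_cong) (use c in \<open>auto simp: tau\<close>)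
      then show "x \<in> F i (pre (\<lambda>k. pre \<tau> n ! prod_encode (i,k)) m)" using \<sigma> by simp
    qed
    then show "x \<in> souslin G" unfolding souslin_def by blast
  qed
  show ?thesis unfolding Sous_def using cl eq by blast
qed

lemma Sous_open:
  assumes "open (S :: 'a::metric_space set)" shows "Sous S"
proof -
  have "fsigma_in euclidean S"
    by (rule open_imp_fsigma_in) (auto simp: assms metrizable_space_euclidean)
  then obtain C :: "nat \<Rightarrow> 'a set" where C: "\<And>n. closedin euclidean (C n)" "\<Union>(range C) = S"
    unfolding fsigma_in_ascending by blast
  have "Sous (\<Union>n. C n)" by (rule Sous_UN, rule Sous_closed) (use C in auto)
  then show ?thesis using C by simp
qed

lemma borel_Sous:
  assumes "A \<in> sets (borel :: 'a::metric_space measure)"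
  shows "Sous A \<and> Sous (- A)"
proof -
  have "A \<in> sigma_sets UNIV {S. open S}" using assms by (simp add: sets_borel)
  then show ?thesis
  proof induction
    case (Basic a) then show ?case
      using Sous_open[of a] Sous_closed[of "- a"] by (simp add: closed_Compl)
  next
    case Empty then show ?case using Sous_closed[of "{}"] Sous_closed[of UNIV] by simp
  next
    case (Compl a) then show ?case by (simp add: Compl_eq_Diff_UNIV[symmetric])
  next
    case (Union a) then show ?case
      using Sous_UN[of a] Sous_INT[of "\<lambda>i. - a i"] by (simp add: uminus_SUP)
  qed
qed

lemma closed_lebesgue: "closed (C :: 'a::euclidean_space set) \<Longrightarrow> C \<in> sets lebesgue"
  by (metis borel_closed sets_completionI_sets sets_lborel)

lemma fmeas_null: "A \<in> fmeasurable M \<Longrightarrow> measure M A = 0 \<Longrightarrow> A \<in> null_sets M"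
  by (metis emeasure_eq_ennreal_measure ennreal_0 fmeasurableD fmeasurable_def null_setsI
        infinity_ennreal_def less_irrefl mem_Collect_eq)

lemma hull_lebesgue:
  fixes S K :: "'a::euclidean_space set"
  assumes K: "K \<in> lmeasurable" "S \<subseteq> K"
  shows "\<exists>B \<in> sets lebesgue. S \<subseteq> B \<and> B \<subseteq> K \<and>
           (\<forall>C\<in>sets lebesgue. S \<subseteq> C \<longrightarrow> B - C \<in> null_sets lebesgue)"
proof -
  define M where "M = {G \<in> sets lebesgue. S \<subseteq> G \<and> G \<subseteq> K}"
  define m where "m = Inf (measure lebesgue ` M)"
  have KM: "K \<in> M" using K by (auto simp: M_def fmeasurableD)
  have Mfm: "G \<in> lmeasurable" if "G \<in> M" for G
    using that K by (auto simp: M_def intro: fmeasurableI2)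
  have bdd: "bdd_below (measure lebesgue ` M)" by (rule bdd_belowI[of _ 0]) auto
  have ne: "measure lebesgue ` M \<noteq> {}" using KM by auto
  have "\<exists>G\<in>M. measure lebesgue G < m + 1 / Suc n" for n
  proof -
    have "Inf (measure lebesgue ` M) < m + 1 / Suc n" unfolding m_def by simp
    then show ?thesis by (subst (asm) cInf_less_iff[OF ne bdd]) auto
  qed
  then obtain Gs where Gs: "\<And>n. Gs n \<in> M" "\<And>n. measure lebesgue (Gs n) < m + 1 / Suc n"
    by metis
  define B where "B = (\<Inter>n. Gs n)"
  have Bs: "B \<in> sets lebesgue" unfolding B_def
    by (rule sets.countable_INT) (use Gs in \<open>auto simp: M_def\<close>)
  have BM: "B \<in> M" using Bs Gs(1)[of 0] Gs(1) unfolding M_def B_def by blast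
  have mB: "m \<le> measure lebesgue B" unfolding m_def by (rule cInf_lower) (use BM bdd in auto)
  have Bm: "measure lebesgue B \<le> m"
  proof (rule ccontr)
    assume "\<not> ?thesis"
    then have "0 < measure lebesgue B - m" by simp
    then obtain n where n: "inverse (real (Suc n)) < measure lebesgue B - m"
      using reals_Archimedean by blast
    have "measure lebesgue B \<le> measure lebesgue (Gs n)"
      by (rule measure_mono_fmeasurable) (use Bs Mfm[OF Gs(1)] in \<open>auto simp: B_def\<close>)
    with Gs(2)[of n] n show False by (simp add: inverse_eq_divide)
  qed
  show ?thesis
  proof (intro bexI conjI ballI impI)
    show "S \<subseteq> B" "B \<subseteq> K" using BM by (auto simp: M_def)
    fix C assume C: "C \<in> sets lebesgue" "S \<subseteq> C"
    have BC: "B \<inter> C \<in> M" using BM C by (auto simp: M_def)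
    have "m \<le> measure lebesgue (B \<inter> C)" unfolding m_def by (rule cInf_lower) (use BC bdd in auto)
    moreover have "measure lebesgue (B - C) = measure lebesgue B - measure lebesgue (B \<inter> C)"
    proof -
      have "B - C = B - (B \<inter> C)" by auto
      then show ?thesis using measurable_measure_Diff[OF Mfm[OF BM], of "B \<inter> C"] BC
        by (auto simp: M_def)
    qed
    moreover have "B - C \<in> lmeasurable" using Mfm[OF BM] C by (auto intro: fmeasurableI2)
    ultimately show "B - C \<in> null_sets lebesgue"
      using mB Bm measure_nonneg[of lebesgue "B - C"] by (intro fmeas_null) auto
  qed (rule Bs)
qed

primrec chain :: "(nat list \<Rightarrow> nat) \<Rightarrow> nat \<Rightarrow> nat list" where
  "chain c 0 = []" | "chain c (Suc n) = chain c n @ [c (chain c n)]"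

lemma chain_pre: "pre (\<lambda>n. c (chain c n)) n = chain c n"
  by (induction n) (simp_all add: pre_Suc)

lemma souslin_lmeas_core:
  fixes F :: "nat list \<Rightarrow> 'a::euclidean_space set"
  assumes Fm: "\<And>s. F s \<in> sets lebesgue" and Fmono: "\<And>s k. F (s @ [k]) \<subseteq> F s"
    and K: "K \<in> lmeasurable" "F [] \<subseteq> K"
  shows "souslin F \<in> sets lebesgue"
proof -
  have Fsub: "F s \<subseteq> K" for s
  proof (induction s rule: rev_induct)
    case Nil then show ?case using K by simp
  next
    case (snoc x xs) then show ?case using Fmono[of xs x] by blast
  qed
  define AS where "AS s = {x. \<exists>\<sigma>. pre \<sigma> (length s) = s \<and> (\<forall>n. x \<in> F (pre \<sigma> n))}" for s
  have AS0: "AS [] = souslin F" by (auto simp: AS_def souslin_def)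
  have ASF: "AS s \<subseteq> F s" for s
  proof
    fix x assume "x \<in> AS s"
    then obtain \<sigma> where "pre \<sigma> (length s) = s" "\<And>n. x \<in> F (pre \<sigma> n)" unfolding AS_def by blast
    then show "x \<in> F s" by metis
  qed
  have ASsplit: "AS s \<subseteq> (\<Union>k. AS (s @ [k]))" for s
  proof
    fix x assume "x \<in> AS s"
    then obtain \<sigma> where \<sigma>: "pre \<sigma> (length s) = s" "\<And>n. x \<in> F (pre \<sigma> n)"
      unfolding AS_def by blast
    have "pre \<sigma> (length (s @ [\<sigma> (length s)])) = s @ [\<sigma> (length s)]"
      using \<sigma>(1) by (simp add: pre_Suc)
    then have "x \<in> AS (s @ [\<sigma> (length s)])" unfolding AS_def using \<sigma>(2) by blast
    then show "x \<in> (\<Union>k. AS (s @ [k]))" by blast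
  qed
  have "\<exists>D\<in>sets lebesgue. AS s \<subseteq> D \<and> D \<subseteq> F s \<and>
           (\<forall>C\<in>sets lebesgue. AS s \<subseteq> C \<longrightarrow> D - C \<in> null_sets lebesgue)" for s
    by (rule hull_lebesgue) (use fmeasurableI2[OF K(1) Fsub Fm] ASF in auto)
  then obtain D where D: "\<And>s. D s \<in> sets lebesgue" "\<And>s. AS s \<subseteq> D s" "\<And>s. D s \<subseteq> F s"
    "\<And>s C. C \<in> sets lebesgue \<Longrightarrow> AS s \<subseteq> C \<Longrightarrow> D s - C \<in> null_sets lebesgue"
    by metis
  define Z where "Z = (\<Union>s. D s - (\<Union>k. D (s @ [k])))"
  have Znull: "Z \<in> null_sets lebesgue"
    unfolding Z_def
  proof (rule null_sets_UN')
    show "countable (UNIV :: nat list set)" by simp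
    show "D s - (\<Union>k. D (s @ [k])) \<in> null_sets lebesgue" if "s \<in> UNIV" for s
    proof -
      have "(\<Union>k. D (s @ [k])) \<in> sets lebesgue" using D(1) by auto
      moreover have "AS s \<subseteq> (\<Union>k. D (s @ [k]))" using ASsplit[of s] D(2) by blast
      ultimately show "D s - (\<Union>k. D (s @ [k])) \<in> null_sets lebesgue" by (rule D(4))
    qed
  qed
  have sub1: "souslin F \<subseteq> D []" using D(2)[of "[]"] AS0 by simp
  have sub2: "D [] - Z \<subseteq> souslin F"
  proof
    fix x assume x: "x \<in> D [] - Z"
    define c where "c s = (SOME k. x \<in> D (s @ [k]))" for s
    have inv: "x \<in> D (chain c n)" for n
    proof (induction n)
      case 0 then show ?case using x by simp
    next
      case (Suc n)
      have "x \<notin> D (chain c n) - (\<Union>k. D (chain c n @ [k]))" using x unfolding Z_def by blast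
      with Suc have "\<exists>k. x \<in> D (chain c n @ [k])" by blast
      then have "x \<in> D (chain c n @ [c (chain c n)])" unfolding c_def by (rule someI_ex)
      then show ?case by simp
    qed
    have "x \<in> F (pre (\<lambda>n. c (chain c n)) n)" for n
      using inv[of n] D(3) unfolding chain_pre by blast
    then show "x \<in> souslin F" unfolding souslin_def by blast
  qed
  have "D [] - souslin F \<in> null_sets lebesgue"
    by (rule null_sets_completion_subset[OF _ Znull]) (use sub2 in blast)
  then have "D [] - (D [] - souslin F) \<in> sets lebesgue" using D(1) by blast
  moreover have "D [] - (D [] - souslin F) = souslin F" using sub1 by blast
  ultimately show ?thesis by simp
qed

definition dec :: "(nat list \<Rightarrow> 'a set) \<Rightarrow> nat list \<Rightarrow> 'a set" where
  "dec F s = (\<Inter>k\<in>{..length s}. F (take k s))"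

lemma dec_pre: "dec F (pre \<sigma> n) = (\<Inter>k\<in>{..n}. F (pre \<sigma> k))"
  by (simp add: dec_def take_pre)

lemma dec_mono: "dec F (s @ [k]) \<subseteq> dec F s"
  unfolding dec_def
proof (intro subsetI INT_I)
  fix x j assume x: "x \<in> (\<Inter>i\<in>{..length (s @ [k])}. F (take i (s @ [k])))" and j: "j \<in> {..length s}"
  have "x \<in> F (take j (s @ [k]))" using INT_D[OF x, of j] j by simp
  then show "x \<in> F (take j s)" using j by simp
qed

lemma dec_mono_pre: "dec F (pre \<sigma> (Suc n)) \<subseteq> dec F (pre \<sigma> n)"
  by (simp add: pre_Suc dec_mono)

lemma INT_dec_pre: "(\<Inter>n. dec F (pre \<sigma> n)) = (\<Inter>n. F (pre \<sigma> n))"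
  unfolding dec_pre by auto

lemma souslin_dec: "souslin (dec F) = souslin F"
  unfolding souslin_def INT_dec_pre ..

lemma closed_dec: "(\<And>s. closed (F s)) \<Longrightarrow> closed (dec F s)"
  unfolding dec_def by (intro closed_INT) auto

lemma Sous_lmeas:
  fixes A :: "'a::euclidean_space set"
  assumes "Sous A" shows "A \<in> sets lebesgue"
proof -
  obtain F where F: "\<And>s. closed (F s)" "A = souslin F" using assms unfolding Sous_def by blast
  have "A \<inter> cball 0 (real m) \<in> sets lebesgue" for m
  proof -
    define F' where "F' s = dec F s \<inter> cball 0 (real m)" for s
    have "souslin F' = souslin (dec F) \<inter> cball 0 (real m)"
      unfolding souslin_def F'_def by auto
    also have "\<dots> = A \<inter> cball 0 (real m)" by (simp add: souslin_dec F(2))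
    finally have eq: "souslin F' = A \<inter> cball 0 (real m)" .
    have "souslin F' \<in> sets lebesgue"
    proof (rule souslin_lmeas_core[OF _ _ lmeasurable_cball])
      show "F' s \<in> sets lebesgue" for s unfolding F'_def
        by (intro sets.Int closed_lebesgue closed_dec F) auto
      show "F' (s @ [k]) \<subseteq> F' s" for s k unfolding F'_def using dec_mono[of F s k] by blast
      show "F' [] \<subseteq> cball 0 (real m)" unfolding F'_def by blast
    qed
    then show ?thesis using eq by simp
  qed
  then have "(\<Union>m. A \<inter> cball 0 (real m)) \<in> sets lebesgue" by (intro sets.countable_UN) auto
  moreover have "(\<Union>m. A \<inter> cball 0 (real m)) = A"
  proof (intro equalityI subsetI)
    fix x assume "x \<in> A"
    moreover obtain m where "norm x \<le> real m" using real_arch_simple by blast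
    ultimately show "x \<in> (\<Union>m. A \<inter> cball 0 (real m))" by auto
  qed auto
  ultimately show ?thesis by simp
qed

lemma image_nest:
  fixes K :: "nat \<Rightarrow> 'b::heine_borel set" and h :: "'b \<Rightarrow> 'c::t2_space"
  assumes h: "continuous_on UNIV h" and K: "\<And>n. compact (K n)" "\<And>n. K (Suc n) \<subseteq> K n"
  shows "h ` (\<Inter>n. K n) = (\<Inter>n. h ` K n)"
proof
  show "h ` (\<Inter>n. K n) \<subseteq> (\<Inter>n. h ` K n)" by blast
  show "(\<Inter>n. h ` K n) \<subseteq> h ` (\<Inter>n. K n)"
  proof
    fix y assume y: "y \<in> (\<Inter>n. h ` K n)"
    define L where "L n = K n \<inter> h -` {y}" for n
    have cl: "closed (h -` {y})" by (rule closed_vimage[OF closed_singleton h])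
    have "compact (L n)" for n unfolding L_def by (rule compact_Int_closed[OF K(1) cl])
    moreover have "L n \<noteq> {}" for n using y by (auto simp: L_def)
    moreover have "L n \<subseteq> L m" if "m \<le> n" for m n
      using lift_Suc_antimono_le[of K, OF K(2) that] by (auto simp: L_def)
    ultimately have "\<Inter>(range L) \<noteq> {}" by (rule compact_nest)
    then obtain x where "x \<in> \<Inter>(range L)" by blast
    then show "y \<in> h ` (\<Inter>n. K n)" by (auto simp: L_def)
  qed
qed

lemma Sous_image:
  fixes h :: "'b::euclidean_space \<Rightarrow> 'c::t2_space"
  assumes h: "continuous_on UNIV h" and E: "Sous E"
  shows "Sous (h ` E)"
proof -
  obtain F where F: "\<And>s. closed (F s)" "E = souslin F" using E unfolding Sous_def by blast
  define G where "G s = (case s of [] \<Rightarrow> UNIV | i # t \<Rightarrow> cball 0 (real i) \<inter> dec F t)" for s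
  define H where "H s = (case s of [] \<Rightarrow> UNIV | i # t \<Rightarrow> h ` G s)" for s
  have Gc: "compact (G (i # t))" for i t
    unfolding G_def by (simp add: compact_Int_closed closed_dec F)
  have cl: "closed (H s)" for s
  proof (cases s)
    case (Cons i t)
    have "compact (h ` G (i # t))"
      by (rule compact_continuous_image[OF continuous_on_subset[OF h] Gc]) auto
    then show ?thesis by (simp add: H_def Cons compact_imp_closed)
  qed (simp add: H_def)
  have GS: "G (pre \<sigma> (Suc n)) = cball 0 (real (\<sigma> 0)) \<inter> dec F (pre (\<lambda>k. \<sigma> (Suc k)) n)" for \<sigma> n
    by (simp add: G_def pre_Suc')
  have INT0: "(\<Inter>n. X n) = (\<Inter>n. X (Suc n))" if "X 0 = UNIV" for X :: "nat \<Rightarrow> 'x set"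
  proof (intro equalityI subsetI)
    fix x assume x: "x \<in> (\<Inter>n. X (Suc n))"
    show "x \<in> (\<Inter>n. X n)"
    proof
      fix n show "x \<in> X n" using x that by (cases n) auto
    qed
  qed auto
  have key: "(\<Inter>n. H (pre \<sigma> n)) = h ` (\<Inter>n. G (pre \<sigma> n))" for \<sigma>
  proof -
    have "(\<Inter>n. H (pre \<sigma> n)) = (\<Inter>n. H (pre \<sigma> (Suc n)))"
      by (rule INT0) (simp add: H_def)
    also have "\<dots> = (\<Inter>n. h ` G (pre \<sigma> (Suc n)))" by (simp add: H_def pre_Suc')
    also have "\<dots> = h ` (\<Inter>n. G (pre \<sigma> (Suc n)))"
    proof (rule image_nest[symmetric, OF h])
      show "compact (G (pre \<sigma> (Suc n)))" for n by (simp add: pre_Suc' Gc)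
      show "G (pre \<sigma> (Suc (Suc n))) \<subseteq> G (pre \<sigma> (Suc n))" for n
        unfolding GS using dec_mono_pre[of F "\<lambda>k. \<sigma> (Suc k)" n] by blast
    qed
    also have "(\<Inter>n. G (pre \<sigma> (Suc n))) = (\<Inter>n. G (pre \<sigma> n))"
      by (rule INT0[symmetric]) (simp add: G_def)
    finally show ?thesis .
  qed
  have eqG: "souslin G = E"
  proof (intro equalityI subsetI)
    fix x assume "x \<in> souslin G"
    then obtain \<sigma> where \<sigma>: "\<And>n. x \<in> G (pre \<sigma> n)" unfolding souslin_def by blast
    have "x \<in> dec F (pre (\<lambda>k. \<sigma> (Suc k)) n)" for n
    proof -
      have "x \<in> G (pre \<sigma> (Suc n))" by (rule \<sigma>)
      then show ?thesis unfolding GS by (rule IntD2)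
    qed
    then have "x \<in> (\<Inter>n. dec F (pre (\<lambda>k. \<sigma> (Suc k)) n))" by blast
    then have "x \<in> (\<Inter>n. F (pre (\<lambda>k. \<sigma> (Suc k)) n))" by (simp only: INT_dec_pre)
    then show "x \<in> E" unfolding F(2) souslin_def by blast
  next
    fix x assume "x \<in> E"
    then obtain \<tau> where \<tau>: "\<And>n. x \<in> F (pre \<tau> n)" unfolding F(2) souslin_def by blast
    obtain i :: nat where i: "norm x \<le> real i" using real_arch_simple by blast
    have xd: "x \<in> dec F (pre \<tau> m)" for m
    proof -
      have "x \<in> (\<Inter>n. F (pre \<tau> n))" using \<tau> by blast
      then have "x \<in> (\<Inter>n. dec F (pre \<tau> n))" by (simp only: INT_dec_pre)
      then show ?thesis by blast
    qed
    have "x \<in> G (pre (case_nat i \<tau>) n)" for n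
    proof (cases n)
      case 0 then show ?thesis by (simp add: G_def)
    next
      case (Suc m)
      have "G (pre (case_nat i \<tau>) n) = cball 0 (real i) \<inter> dec F (pre \<tau> m)"
        unfolding Suc pre_case_nat G_def by simp
      then show ?thesis using xd[of m] i by simp
    qed
    then show "x \<in> souslin G" unfolding souslin_def by blast
  qed
  have "souslin H = h ` E"
    unfolding eqG[symmetric] souslin_def key by (simp add: image_UN)
  then show ?thesis unfolding Sous_def using cl by blast
qed

lemma borel_image_lebesgue:
  fixes h :: "'b::euclidean_space \<Rightarrow> 'a::euclidean_space"
  assumes "continuous_on UNIV h" "E \<in> sets borel"
  shows "h ` E \<in> sets lebesgue"
  using Sous_lmeas[OF Sous_image[OF assms(1) conjunct1[OF borel_Sous[OF assms(2)]]]] .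

lemma INF_conv_meas:
  fixes \<phi> :: "'a::euclidean_space \<times> 'a \<Rightarrow> ereal"
  assumes phi: "\<phi> \<in> borel_measurable borel"
  shows "(\<lambda>x. INF y. \<phi> (x - y, y)) \<in> borel_measurable lebesgue"
  unfolding borel_measurable_ereal_iff_Iio
proof
  fix a
  have "(\<lambda>x. INF y. \<phi> (x - y, y)) -` {..<a} \<inter> space lebesgue = (\<lambda>p. fst p + snd p) ` {p. \<phi> p < a}"
  proof (intro equalityI subsetI)
    fix x assume "x \<in> (\<lambda>x. INF y. \<phi> (x - y, y)) -` {..<a} \<inter> space lebesgue"
    then have "(INF y. \<phi> (x - y, y)) < a" by simp
    then obtain y where "\<phi> (x - y, y) < a" by (auto simp: INF_less_iff)
    then show "x \<in> (\<lambda>p. fst p + snd p) ` {p. \<phi> p < a}" by (intro image_eqI[of _ _ "(x - y, y)"]) auto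
  next
    fix x assume "x \<in> (\<lambda>p. fst p + snd p) ` {p. \<phi> p < a}"
    then obtain z y where xy: "x = z + y" "\<phi> (z, y) < a" by auto
    then have "\<phi> (x - y, y) < a" by simp
    then have "(INF y. \<phi> (x - y, y)) < a" by (auto simp: INF_less_iff)
    then show "x \<in> (\<lambda>x. INF y. \<phi> (x - y, y)) -` {..<a} \<inter> space lebesgue" by simp
  qed
  also have "\<dots> \<in> sets lebesgue"
  proof (rule borel_image_lebesgue)
    show "continuous_on UNIV (\<lambda>p::'a \<times> 'a. fst p + snd p)" by (intro continuous_intros)
    have "\<phi> -` {..<a} \<inter> space borel \<in> sets borel"
      using phi unfolding borel_measurable_ereal_iff_Iio by blast
    moreover have "\<phi> -` {..<a} \<inter> space borel = {p. \<phi> p < a}" by auto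
    ultimately show "{p. \<phi> p < a} \<in> sets borel" by simp
  qed
  finally show "(\<lambda>x. INF y. \<phi> (x - y, y)) -` {..<a} \<inter> space lebesgue \<in> sets lebesgue" .
qed

lemma recip_meas: "recip \<in> borel_measurable borel"
  unfolding recip_def by measurable

lemma fst_snd_meas:
  fixes f :: "'a::euclidean_space \<Rightarrow> ereal"
  assumes "f \<in> borel_measurable borel"
  shows "(\<lambda>p::'a\<times>'a. f (fst p)) \<in> borel_measurable borel" "(\<lambda>p::'a\<times>'a. f (snd p)) \<in> borel_measurable borel"
  by (rule measurable_compose[OF borel_measurable_continuous_onI assms], intro continuous_intros)+

lemma infconv_meas:
  fixes f g :: "'a::euclidean_space \<Rightarrow> ereal"
  assumes "f \<in> borel_measurable borel" "g \<in> borel_measurable borel"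
  shows "infconv f g \<in> borel_measurable lebesgue" "levconv f g \<in> borel_measurable lebesgue"
proof -
  have "(\<lambda>p::'a\<times>'a. f (fst p) + g (snd p)) \<in> borel_measurable borel"
    using fst_snd_meas[OF assms(1)] fst_snd_meas[OF assms(2)] by (intro borel_measurable_ereal_add) auto
  from INF_conv_meas[OF this] show "infconv f g \<in> borel_measurable lebesgue"
    by (simp add: infconv_def[abs_def])
  have "(\<lambda>p::'a\<times>'a. max (f (fst p)) (g (snd p))) \<in> borel_measurable borel"
    using fst_snd_meas[OF assms(1)] fst_snd_meas[OF assms(2)] by (intro borel_measurable_max) auto
  from INF_conv_meas[OF this] show "levconv f g \<in> borel_measurable lebesgue"
    by (simp add: levconv_def[abs_def])
qed

lemma ennreal_le_suminf: "(f::nat \<Rightarrow> ennreal) k \<le> suminf f"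
  using sum_le_suminf[OF summableI, of "{k}" f] by simp

lemma radial_pointwise:
  fixes x :: "'a::real_normed_vector" and \<beta> :: real
  assumes b: "\<beta> > 0"
  shows "indicator {x. 1 \<le> norm x} x * ennreal (norm x powr -\<beta>)
     \<le> (\<Sum>k. indicator (ball 0 (2 ^ Suc k)) x * ennreal ((2 powr -\<beta>) ^ k))"
proof (cases "1 \<le> norm x")
  case True
  define k where "k = nat \<lfloor>log 2 (norm x)\<rfloor>"
  have l0: "0 \<le> log 2 (norm x)" using True by (subst zero_le_log_cancel_iff) auto
  have k1: "real k \<le> log 2 (norm x)" unfolding k_def using l0 by linarith
  have k2: "log 2 (norm x) < real k + 1" unfolding k_def using l0 by linarith
  have n0: "0 < norm x" using True by linarith
  have "2 powr real k \<le> 2 powr log 2 (norm x)" using k1 by simp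
  then have lo: "2 ^ k \<le> norm x" using n0 by (simp add: powr_realpow)
  have "2 powr log 2 (norm x) < 2 powr (real k + 1)" using k2 by simp
  then have hi: "norm x < 2 ^ Suc k" using n0 by (simp add: powr_realpow[symmetric] powr_add)
  have "norm x powr -\<beta> \<le> (2 ^ k) powr -\<beta>"
    by (rule powr_mono2') (use b lo in auto)
  also have "(2 ^ k) powr -\<beta> = (2 powr -\<beta>) ^ k"
    by (simp add: powr_realpow[symmetric] powr_powr powr_power mult.commute)
  finally have le: "norm x powr -\<beta> \<le> (2 powr -\<beta>) ^ k" .
  have "indicator {x. 1 \<le> norm x} x * ennreal (norm x powr -\<beta>)
        \<le> indicator (ball 0 (2 ^ Suc k)) x * ennreal ((2 powr -\<beta>) ^ k)"
    using True hi le by (simp add: indicator_def ennreal_leI)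
  also have "\<dots> \<le> (\<Sum>k. indicator (ball 0 (2 ^ Suc k)) x * ennreal ((2 powr -\<beta>) ^ k))"
    by (rule ennreal_le_suminf[where f="\<lambda>k. indicator (ball 0 (2 ^ Suc k)) x * ennreal ((2 powr -\<beta>) ^ k)"])
  finally show ?thesis .
qed simp

lemma radial_int:
  fixes \<beta> :: real
  assumes b: "\<beta> > DIM('a)"
  shows "(\<integral>\<^sup>+x. indicator {x::'a::euclidean_space. 1 \<le> norm x} x * ennreal (norm x powr -\<beta>) \<partial>lborel) < \<infinity>"
proof -
  define q :: real where "q = 2 powr -\<beta>"
  define V where "V = unit_ball_vol (real DIM('a))"
  define N where "N = DIM('a)"
  have V0: "0 \<le> V" unfolding V_def by (simp add: unit_ball_vol_nonneg)
  have bpos: "\<beta> > 0" using b by (metis of_nat_0_le_iff order_le_less_trans)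
  have "(\<integral>\<^sup>+x. indicator {x::'a. 1 \<le> norm x} x * ennreal (norm x powr -\<beta>) \<partial>lborel)
      \<le> (\<integral>\<^sup>+x. (\<Sum>k. indicator (ball (0::'a) (2 ^ Suc k)) x * ennreal (q ^ k)) \<partial>lborel)"
    unfolding q_def by (rule nn_integral_mono) (rule radial_pointwise[OF bpos])
  also have "\<dots> = (\<Sum>k. \<integral>\<^sup>+x. indicator (ball (0::'a) (2 ^ Suc k)) x * ennreal (q ^ k) \<partial>lborel)"
    by (rule nn_integral_suminf) (intro borel_measurable_times_ennreal borel_measurable_indicator measurable_const, auto)
  also have "\<dots> = (\<Sum>k. ennreal (V * 2 ^ N * (q * 2 ^ N) ^ k))"
  proof (rule suminf_cong)
    fix k
    have "(\<integral>\<^sup>+x. indicator (ball (0::'a) (2 ^ Suc k)) x * ennreal (q ^ k) \<partial>lborel)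
        = ennreal (q ^ k) * emeasure lborel (ball (0::'a) (2 ^ Suc k))"
      using nn_integral_cmult_indicator[of "ball (0::'a) (2 ^ Suc k)" lborel "ennreal (q ^ k)"]
      by (simp add: mult.commute)
    also have "\<dots> = ennreal (q ^ k) * ennreal (V * (2 ^ Suc k) ^ N)"
      by (simp add: emeasure_ball V_def N_def)
    also have "\<dots> = ennreal (V * 2 ^ N * (q * 2 ^ N) ^ k)"
      by (subst ennreal_mult[symmetric]) (auto simp: q_def V0 power_mult_distrib power_mult[symmetric] mult.commute mult.left_commute intro!: arg_cong[where f=ennreal])
    finally show "(\<integral>\<^sup>+x. indicator (ball (0::'a) (2 ^ Suc k)) x * ennreal (q ^ k) \<partial>lborel)
        = ennreal (V * 2 ^ N * (q * 2 ^ N) ^ k)" .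
  qed
  also have "\<dots> < \<infinity>"
  proof -
    have q0: "0 \<le> q * 2 ^ N" unfolding q_def by simp
    have "q * 2 ^ N = 2 powr (real N - \<beta>)"
      unfolding q_def by (simp add: powr_realpow[symmetric] powr_add[symmetric])
    also have "\<dots> < 2 powr 0" using b unfolding N_def by (intro powr_less_mono) auto
    also have "\<dots> = 1" by simp
    finally have q1: "q * 2 ^ N < 1" .
    have "summable (\<lambda>k. V * 2 ^ N * (q * 2 ^ N) ^ k)"
      by (rule summable_mult, rule summable_geometric) (use q0 q1 in simp)
    then have "(\<Sum>k. ennreal (V * 2 ^ N * (q * 2 ^ N) ^ k)) \<noteq> top"
      by (rule ennreal_suminf_neq_top) (use V0 q0 in simp)
    then show ?thesis by (simp add: top.not_eq_extremum)
  qed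
  finally show ?thesis .
qed

lemma recip_le:
  assumes e: "0 < e" "ereal e \<le> y"
  shows "recip y < top \<and> enn2real (recip y) \<le> 1 / e"
proof (cases y)
  case (real t)
  with e have t: "e \<le> t" "0 < t" by auto
  then have "recip y = ennreal (1 / t)" by (simp add: recip_def real)
  moreover have "1 / t \<le> 1 / e" using t e by (simp add: frac_le)
  ultimately show ?thesis using t by simp
next
  case PInf then show ?thesis using e by (simp add: recip_def)
next
  case MInf then show ?thesis using e by simp
qed

lemma powr_recip_bound:
  fixes c n p \<alpha> :: real
  assumes c: "0 < c" and n: "0 < n" and p: "0 \<le> p"
  shows "(1 / (c * n powr \<alpha>)) powr p = c powr -p * n powr -(\<alpha> * p)"
proof -
  have "(1 / (c * n powr \<alpha>)) powr p = 1 / (c * n powr \<alpha>) powr p"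
    using powr_divide[of 1 "c * n powr \<alpha>" p] by simp
  also have "(c * n powr \<alpha>) powr p = c powr p * n powr (\<alpha> * p)"
    using c n by (simp add: powr_mult powr_powr)
  finally show ?thesis by (simp add: powr_minus_divide)
qed

lemma Lp_from_bounds:
  fixes h :: "'a::euclidean_space \<Rightarrow> ereal"
  assumes hm: "h \<in> borel_measurable lebesgue" and d: "d > 0" "\<And>x. ereal d \<le> h x"
    and c: "c > 0" and R: "\<And>x. norm x \<ge> R \<Longrightarrow> ereal (c * norm x powr \<alpha>) \<le> h x"
    and \<alpha>: "\<alpha> > 0" and p: "p \<ge> 1" "p > DIM('a) / \<alpha>"
  shows "in_Lp (\<lambda>x. recip (h x)) p"
  unfolding in_Lp_def
proof (intro conjI)
  show "(\<lambda>x. recip (h x)) \<in> borel_measurable lebesgue" by (rule measurable_compose[OF hm recip_meas])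
  show "AE x in lebesgue. recip (h x) < top" using recip_le[OF d(1) d(2)] by auto
  define R1 where "R1 = max R 1"
  define \<beta> where "\<beta> = \<alpha> * p"
  have \<beta>: "\<beta> > DIM('a)" using p(2) \<alpha> unfolding \<beta>_def by (simp add: pos_divide_less_eq mult.commute)
  have pt: "ennreal (enn2real (recip (h x)) powr p) \<le>
      ennreal ((1/d) powr p) * indicator (cball 0 R1) x +
      ennreal (c powr -p) * (indicator {x. 1 \<le> norm x} x * ennreal (norm x powr -\<beta>))" for x
  proof (cases "norm x \<le> R1")
    case True
    have "enn2real (recip (h x)) powr p \<le> (1/d) powr p"
      by (rule powr_mono2) (use recip_le[OF d(1) d(2)[of x]] p in auto)
    then have "ennreal (enn2real (recip (h x)) powr p) \<le> ennreal ((1/d) powr p) * indicator (cball 0 R1) x"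
      using True by (simp add: ennreal_leI)
    then show ?thesis by (rule order_trans) (rule add_increasing2, auto)
  next
    case False
    then have n: "norm x \<ge> R" "norm x \<ge> 1" unfolding R1_def by auto
    have "norm x \<noteq> 0" using n by linarith
    then have e: "0 < c * norm x powr \<alpha>" using c by simp
    have "enn2real (recip (h x)) powr p \<le> (1 / (c * norm x powr \<alpha>)) powr p"
      by (rule powr_mono2) (use recip_le[OF e R[OF n(1)]] p in auto)
    also have "\<dots> = c powr -p * norm x powr -\<beta>"
      unfolding \<beta>_def by (rule powr_recip_bound) (use c n p in auto)
    finally have le: "enn2real (recip (h x)) powr p \<le> c powr -p * norm x powr -\<beta>" .
    have ind: "indicator {x. 1 \<le> norm x} x = (1::ennreal)" using n by simp
    have "ennreal (c powr -p) * ennreal (norm x powr -\<beta>) = ennreal (c powr -p * norm x powr -\<beta>)"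
      by (simp add: ennreal_mult)
    then have "ennreal (enn2real (recip (h x)) powr p) \<le> ennreal (c powr -p) * (indicator {x. 1 \<le> norm x} x * ennreal (norm x powr -\<beta>))"
      using le ind by (simp add: ennreal_leI)
    then show ?thesis by (rule order_trans) (rule add_increasing, auto)
  qed
  have "(\<integral>\<^sup>+ x. ennreal (enn2real (recip (h x)) powr p) \<partial>lebesgue)
      = (\<integral>\<^sup>+ x. ennreal (enn2real (recip (h x)) powr p) \<partial>lborel)"
    by (rule nn_integral_completion)
  also have "\<dots> \<le> (\<integral>\<^sup>+ x. ennreal ((1/d) powr p) * indicator (cball (0::'a) R1) x +
      ennreal (c powr -p) * (indicator {x. 1 \<le> norm x} x * ennreal (norm x powr -\<beta>)) \<partial>lborel)"
    by (intro nn_integral_mono) (use pt in blast)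
  also have "\<dots> = (\<integral>\<^sup>+ x. ennreal ((1/d) powr p) * indicator (cball (0::'a) R1) x \<partial>lborel) +
      (\<integral>\<^sup>+ x. ennreal (c powr -p) * (indicator {x::'a. 1 \<le> norm x} x * ennreal (norm x powr -\<beta>)) \<partial>lborel)"
  proof (rule nn_integral_add)
    show "(\<lambda>x::'a. ennreal ((1/d) powr p) * indicator (cball (0::'a) R1) x) \<in> borel_measurable lborel"
      by (intro borel_measurable_times_ennreal borel_measurable_indicator measurable_const) auto
    have m2: "(\<lambda>x::'a. indicator {x. 1 \<le> norm x} x * ennreal (norm x powr -\<beta>)) \<in> borel_measurable lborel"
      by measurable
    show "(\<lambda>x::'a. ennreal (c powr -p) * (indicator {x. 1 \<le> norm x} x * ennreal (norm x powr -\<beta>))) \<in> borel_measurable lborel"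
      by (rule borel_measurable_times_ennreal[OF measurable_const m2]) simp
  qed
  also have "\<dots> = ennreal ((1/d) powr p) * emeasure lborel (cball (0::'a) R1) +
      ennreal (c powr -p) * (\<integral>\<^sup>+ x. indicator {x::'a. 1 \<le> norm x} x * ennreal (norm x powr -\<beta>) \<partial>lborel)"
  proof -
    have i1: "(\<integral>\<^sup>+ x. ennreal ((1/d) powr p) * indicator (cball (0::'a) R1) x \<partial>lborel)
        = ennreal ((1/d) powr p) * emeasure lborel (cball (0::'a) R1)"
      by (rule nn_integral_cmult_indicator) simp
    have m2: "(\<lambda>x::'a. indicator {x. 1 \<le> norm x} x * ennreal (norm x powr -\<beta>)) \<in> borel_measurable lborel"
      by measurable
    have i2: "(\<integral>\<^sup>+ x. ennreal (c powr -p) * (indicator {x::'a. 1 \<le> norm x} x * ennreal (norm x powr -\<beta>)) \<partial>lborel)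
       = ennreal (c powr -p) * (\<integral>\<^sup>+ x. indicator {x::'a. 1 \<le> norm x} x * ennreal (norm x powr -\<beta>) \<partial>lborel)"
      by (rule nn_integral_cmult) (rule m2)
    show ?thesis by (simp only: i1 i2)
  qed
  also have "\<dots> < \<infinity>"
  proof -
    have f1: "ennreal ((1/d) powr p) * emeasure lborel (cball (0::'a) R1) < \<infinity>"
      using emeasure_lborel_cball_finite[of "0::'a" R1] by (simp add: ennreal_mult_less_top)
    have f2: "ennreal (c powr -p) * (\<integral>\<^sup>+ x. indicator {x::'a. 1 \<le> norm x} x * ennreal (norm x powr -\<beta>) \<partial>lborel) < \<infinity>"
      using radial_int[OF \<beta>] by (simp add: ennreal_mult_less_top)
    show ?thesis using f1 f2 by (simp add: less_top[symmetric] ennreal_add_eq_top)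
  qed
  finally show "(\<integral>\<^sup>+ x. ennreal (enn2real (recip (h x)) powr p) \<partial>lebesgue) < top" by simp
qed

lemma split_growth:
  fixes F G :: "'a::real_normed_vector \<Rightarrow> ereal"
  assumes gr: "\<And>z. norm z \<ge> R \<Longrightarrow> F z \<ge> ereal (c * norm z powr \<alpha>) \<and> G z \<ge> ereal (c * norm z powr \<alpha>)"
    and R: "R \<ge> 0" and \<alpha>: "\<alpha> > 0" and c: "c > 0" and x: "norm x \<ge> 2 * R"
  shows "F (x - y) \<ge> ereal (c / 2 powr \<alpha> * norm x powr \<alpha>) \<or> G y \<ge> ereal (c / 2 powr \<alpha> * norm x powr \<alpha>)"
proof -
  have eq: "c / 2 powr \<alpha> * norm x powr \<alpha> = c * (norm x / 2) powr \<alpha>"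
    by (simp add: powr_divide)
  have mono: "c * (norm x / 2) powr \<alpha> \<le> c * norm z powr \<alpha>" if "norm z \<ge> norm x / 2" for z :: 'a
    using that c \<alpha> by (intro mult_left_mono powr_mono2) auto
  show ?thesis
  proof (cases "norm y \<ge> norm x / 2")
    case True
    then have "norm y \<ge> R" using x by linarith
    then have "G y \<ge> ereal (c * norm y powr \<alpha>)" using gr by blast
    moreover have "ereal (c * (norm x / 2) powr \<alpha>) \<le> ereal (c * norm y powr \<alpha>)" using mono[OF True] by simp
    ultimately show ?thesis unfolding eq by (meson order_trans)
  next
    case False
    have "norm x - norm y \<le> norm (x - y)" by (rule norm_triangle_ineq2)
    then have nx: "norm (x - y) \<ge> norm x / 2" using False by linarith
    then have "norm (x - y) \<ge> R" using x by linarith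
    then have "F (x - y) \<ge> ereal (c * norm (x - y) powr \<alpha>)" using gr by blast
    moreover have "ereal (c * (norm x / 2) powr \<alpha>) \<le> ereal (c * norm (x - y) powr \<alpha>)" using mono[OF nx] by simp
    ultimately show ?thesis unfolding eq by (meson order_trans)
  qed
qed

lemma part1:
  fixes f g :: "'a::euclidean_space \<Rightarrow> ereal" and c \<alpha> R p :: real
  assumes fm: "f \<in> borel_measurable borel" and gm: "g \<in> borel_measurable borel"
    and c: "c > 0" and \<alpha>: "\<alpha> > 0" and R: "R \<ge> 0"
    and gr: "\<And>z. norm z \<ge> R \<Longrightarrow> f z \<ge> ereal (c * norm z powr \<alpha>) \<and> g z \<ge> ereal (c * norm z powr \<alpha>)"
    and hf: "\<bar>Inf (range f)\<bar> \<noteq> \<infinity>" and hg: "\<bar>Inf (range g)\<bar> \<noteq> \<infinity>"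
    and pos: "Inf (range f) + Inf (range g) > 0"
    and p: "p \<ge> 1" "p > real DIM('a) / \<alpha>"
  shows "in_Lp (\<lambda>x. recip (infconv f g x)) p"
proof -
  obtain a where a: "Inf (range f) = ereal a" using hf by (cases "Inf (range f)") auto
  obtain b where b: "Inf (range g) = ereal b" using hg by (cases "Inf (range g)") auto
  have ab: "a + b > 0" using pos a b by simp
  have fa: "ereal a \<le> f z" for z using Inf_lower[of "f z" "range f"] a by simp
  have gb: "ereal b \<le> g z" for z using Inf_lower[of "g z" "range g"] b by simp
  define \<mu> where "\<mu> = min a b"
  define c' where "c' = c / 2 powr \<alpha>"
  have c'0: "c' > 0" using c by (simp add: c'_def)
  define R2 where "R2 = max (2 * R) (max 1 ((2 * \<bar>\<mu>\<bar> / c') powr (1 / \<alpha>)))"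
  have low: "ereal (a + b) \<le> infconv f g x" for x
    unfolding infconv_def
  proof (rule INF_greatest)
    fix y
    have "ereal a + ereal b \<le> f (x - y) + g y" by (rule add_mono) (rule fa, rule gb)
    then show "ereal (a + b) \<le> f (x - y) + g y" by simp
  qed
  have gro: "ereal (c' / 2 * norm x powr \<alpha>) \<le> infconv f g x" if "norm x \<ge> R2" for x
  proof -
    have n2R: "norm x \<ge> 2 * R" and nb: "norm x \<ge> (2 * \<bar>\<mu>\<bar> / c') powr (1 / \<alpha>)"
      using that by (auto simp: R2_def)
    have "((2 * \<bar>\<mu>\<bar> / c') powr (1 / \<alpha>)) powr \<alpha> \<le> norm x powr \<alpha>"
      by (rule powr_mono2) (use \<alpha> nb in auto)
    moreover have "((2 * \<bar>\<mu>\<bar> / c') powr (1 / \<alpha>)) powr \<alpha> = 2 * \<bar>\<mu>\<bar> / c'"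
      using \<alpha> c'0 by (simp add: powr_powr)
    ultimately have "2 * \<bar>\<mu>\<bar> / c' \<le> norm x powr \<alpha>" by simp
    then have "c' * (2 * \<bar>\<mu>\<bar> / c') \<le> c' * norm x powr \<alpha>" using c'0 by (intro mult_left_mono) auto
    then have big: "2 * \<bar>\<mu>\<bar> \<le> c' * norm x powr \<alpha>" using c'0 by simp
    show ?thesis unfolding infconv_def
    proof (rule INF_greatest)
      fix y
      have sg: "f (x - y) \<ge> ereal (c' * norm x powr \<alpha>) \<or> g y \<ge> ereal (c' * norm x powr \<alpha>)"
        unfolding c'_def by (rule split_growth[OF gr R \<alpha> c n2R])
      have "ereal (\<mu> + c' * norm x powr \<alpha>) \<le> f (x - y) + g y"
      proof (cases "f (x - y) \<ge> ereal (c' * norm x powr \<alpha>)")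
        case True
        have "ereal (c' * norm x powr \<alpha>) + ereal \<mu> \<le> f (x - y) + g y"
          by (rule add_mono[OF True]) (rule order_trans[OF _ gb[of y]], simp add: \<mu>_def)
        then show ?thesis by (simp add: add.commute)
      next
        case False
        then have G: "g y \<ge> ereal (c' * norm x powr \<alpha>)" using sg by blast
        have "ereal \<mu> + ereal (c' * norm x powr \<alpha>) \<le> f (x - y) + g y"
          by (rule add_mono[OF _ G]) (rule order_trans[OF _ fa[of "x - y"]], simp add: \<mu>_def)
        then show ?thesis by simp
      qed
      moreover have "c' / 2 * norm x powr \<alpha> \<le> \<mu> + c' * norm x powr \<alpha>" using big by linarith
      ultimately show "ereal (c' / 2 * norm x powr \<alpha>) \<le> f (x - y) + g y"
        by (meson ereal_less_eq(3) order_trans)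
    qed
  qed
  show ?thesis
    by (rule Lp_from_bounds[OF infconv_meas(1)[OF fm gm] ab low _ gro \<alpha> p]) (use c'0 in simp)
qed

lemma part2:
  fixes f g :: "'a::euclidean_space \<Rightarrow> ereal" and c \<alpha> R p :: real
  assumes fm: "f \<in> borel_measurable borel" and gm: "g \<in> borel_measurable borel"
    and c: "c > 0" and \<alpha>: "\<alpha> > 0" and R: "R \<ge> 0"
    and gr: "\<And>z. norm z \<ge> R \<Longrightarrow> f z \<ge> ereal (c * norm z powr \<alpha>) \<and> g z \<ge> ereal (c * norm z powr \<alpha>)"
    and g0: "\<forall>x. g x \<ge> 0" and pos: "Inf (range (\<lambda>x. max (f x) 0)) + Inf (range g) > 0"
    and p: "p \<ge> 1" "p > real DIM('a) / \<alpha>"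
  shows "in_Lp (\<lambda>x. recip (levconv f g x)) p"
proof -
  define A where "A = Inf (range (\<lambda>x. max (f x) 0))"
  define B where "B = Inf (range g)"
  have A0: "A \<ge> 0" unfolding A_def by (rule INF_greatest) simp
  have B0: "B \<ge> 0" unfolding B_def by (rule INF_greatest) (use g0 in simp)
  define M where "M = max A B"
  have M0: "M > 0"
  proof (rule ccontr)
    assume "\<not> M > 0"
    then have "A = 0" "B = 0" using A0 B0 by (auto simp: M_def max_def split: if_splits)
    then show False using pos by (simp add: A_def B_def)
  qed
  obtain d where d: "d > 0" "ereal d \<le> M"
  proof (cases M)
    case (real r) then show ?thesis using M0 that[of r] by simp
  next
    case PInf then show ?thesis using that[of 1] by simp
  next
    case MInf then show ?thesis using M0 by simp
  qed
  have low: "ereal d \<le> levconv f g x" for x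
    unfolding levconv_def
  proof (rule INF_greatest)
    fix y
    have "A \<le> max (f (x - y)) 0" unfolding A_def by (rule INF_lower) simp
    moreover have "B \<le> g y" unfolding B_def by (rule INF_lower) simp
    moreover have "max (max (f (x - y)) 0) (g y) = max (f (x - y)) (g y)"
      using spec[OF g0, of y] by (simp only: max.assoc max_absorb2)
    ultimately have "M \<le> max (f (x - y)) (g y)" unfolding M_def by (metis max.mono)
    then show "ereal d \<le> max (f (x - y)) (g y)" using d(2) by simp
  qed
  define c' where "c' = c / 2 powr \<alpha>"
  have c'0: "c' > 0" using c by (simp add: c'_def)
  have gro: "ereal (c' * norm x powr \<alpha>) \<le> levconv f g x" if "norm x \<ge> 2 * R" for x
    unfolding levconv_def
  proof (rule INF_greatest)
    fix y
    have "f (x - y) \<ge> ereal (c' * norm x powr \<alpha>) \<or> g y \<ge> ereal (c' * norm x powr \<alpha>)"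
      unfolding c'_def by (rule split_growth[OF gr R \<alpha> c that])
    then show "ereal (c' * norm x powr \<alpha>) \<le> max (f (x - y)) (g y)" by (auto simp: le_max_iff_disj)
  qed
  show ?thesis
    by (rule Lp_from_bounds[OF infconv_meas(2)[OF fm gm] d(1) low c'0 gro \<alpha> p])
qed

theorem theorem22:
  fixes f g :: "'a::euclidean_space \<Rightarrow> ereal" and c \<alpha> :: real
  assumes fmeas: "f \<in> borel_measurable borel" and gmeas: "g \<in> borel_measurable borel"
    and fnm: "\<And>x. f x \<noteq> -\<infinity>" and gnm: "\<And>x. g x \<noteq> -\<infinity>"
    and c: "c > 0" and \<alpha>: "\<alpha> > 0"
    and growth: "\<exists>R. \<forall>x. norm x \<ge> R \<longrightarrow>
                   f x \<ge> ereal (c * norm x powr \<alpha>) \<and> g x \<ge> ereal (c * norm x powr \<alpha>)"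
  shows "(\<bar>Inf (range f)\<bar> \<noteq> \<infinity> \<and> \<bar>Inf (range g)\<bar> \<noteq> \<infinity> \<and> Inf (range f) + Inf (range g) > 0
            \<longrightarrow> (\<forall>p::real. p \<ge> 1 \<and> p > real DIM('a) / \<alpha> \<longrightarrow> in_Lp (\<lambda>x. recip (infconv f g x)) p))
       \<and> ((\<forall>x. g x \<ge> 0) \<and> Inf (range (\<lambda>x. max (f x) 0)) + Inf (range g) > 0
            \<longrightarrow> (\<forall>p::real. p \<ge> 1 \<and> p > real DIM('a) / \<alpha> \<longrightarrow> in_Lp (\<lambda>x. recip (levconv f g x)) p))"
proof -
  obtain R0 where R0: "\<And>x. norm x \<ge> R0 \<Longrightarrow> f x \<ge> ereal (c * norm x powr \<alpha>) \<and> g x \<ge> ereal (c * norm x powr \<alpha>)"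
    using growth by blast
  define R where "R = max R0 0"
  have R: "R \<ge> 0" by (simp add: R_def)
  have gr: "\<And>z. norm z \<ge> R \<Longrightarrow> f z \<ge> ereal (c * norm z powr \<alpha>) \<and> g z \<ge> ereal (c * norm z powr \<alpha>)"
    using R0 by (simp add: R_def)
  show ?thesis
  proof (intro conjI impI allI)
    fix p :: real
    assume h: "\<bar>Inf (range f)\<bar> \<noteq> \<infinity> \<and> \<bar>Inf (range g)\<bar> \<noteq> \<infinity> \<and> Inf (range f) + Inf (range g) > 0"
      and p: "p \<ge> 1 \<and> p > real DIM('a) / \<alpha>"
    show "in_Lp (\<lambda>x. recip (infconv f g x)) p"
    proof (rule part1[OF fmeas gmeas c \<alpha> R])
      show "\<And>z. R \<le> norm z \<Longrightarrow> ereal (c * norm z powr \<alpha>) \<le> f z \<and> ereal (c * norm z powr \<alpha>) \<le> g z"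
        by (rule gr)
    qed (use h p in auto)
  next
    fix p :: real
    assume h: "(\<forall>x. g x \<ge> 0) \<and> Inf (range (\<lambda>x. max (f x) 0)) + Inf (range g) > 0"
      and p: "p \<ge> 1 \<and> p > real DIM('a) / \<alpha>"
    show "in_Lp (\<lambda>x. recip (levconv f g x)) p"
    proof (rule part2[OF fmeas gmeas c \<alpha> R])
      show "\<And>z. R \<le> norm z \<Longrightarrow> ereal (c * norm z powr \<alpha>) \<le> f z \<and> ereal (c * norm z powr \<alpha>) \<le> g z"
        by (rule gr)
    qed (use h p in auto)
  qed
qed

end
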